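(* Let $Y_1,Y_2$ be nonzero ordinary differential operators (with coefficients in $\mathbb C(x)$), and set $X=Y_1Y_2$ and $\hat X=Y_2Y_1$. Then $X$ and $\hat X$ have the same true rank.
   Context: The rank of a set of ordinary differential operators is the greatest common divisor of the orders of its elements. The true rank of an ordinary differential operator is the rank of its centralizer in the ring of ordinary differential operators (here, those with coefficients in $\mathbb C(x)$). *)

theory Defs
  imports "HOL-Computational_Algebra.Computational_Algebra"
begin

type_synonym ratfun = "complex poly fract"

text \<open>The derivation d/dx on C(x), via the quotient rule on any representation p/q with q nonzero
  (well defined since the quotient rule respects equivalence of fractions).\<close>
definition rderiv :: "ratfun \<Rightarrow> ratfun" where
  "rderiv r = (case (SOME (p, q). q \<noteq> 0 \<and> r = Fract p q) of (p, q) \<Rightarrow>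
      Fract (pderiv p * q - p * pderiv q) (q * q))"

text \<open>An ordinary differential operator sum a_i D^i with a_i in C(x) is stored as the
  polynomial with coefficients a_i (only the additive structure of poly is used);
  its order is the degree.\<close>
type_synonym diffop = "ratfun poly"

definition dop_order :: "diffop \<Rightarrow> nat" where
  "dop_order L = degree L"

text \<open>Composition of operators: (a D^i)(b D^j) = sum_k (i choose k) a b^(k) D^(i+j-k).\<close>
definition dop_mult :: "diffop \<Rightarrow> diffop \<Rightarrow> diffop" where
  "dop_mult P Q = (\<Sum>i\<le>degree P. \<Sum>j\<le>degree Q. \<Sum>k\<le>i.
      monom (of_nat (i choose k) * coeff P i * (rderiv ^^ k) (coeff Q j)) (i + j - k))"

definition centralizer :: "diffop \<Rightarrow> diffop set" where
  "centralizer L = {M. dop_mult L M = dop_mult M L}"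

definition dop_rank :: "diffop set \<Rightarrow> nat" where
  "dop_rank S = Gcd (dop_order ` (S - {0}))"

definition true_rank :: "diffop \<Rightarrow> nat" where
  "true_rank L = dop_rank (centralizer L)"

end

theory Submission
  imports Defs
begin

lemma rderiv_Fract:
  assumes q: "q \<noteq> 0"
  shows "rderiv (Fract p q) = Fract (pderiv p * q - p * pderiv q) (q * q)"
proof -
  have ex: "\<exists>x. (case x of (a, b) \<Rightarrow> b \<noteq> 0 \<and> Fract p q = Fract a b)"
    using q by auto
  obtain p0 q0 where pq: "(SOME x. case x of (a, b) \<Rightarrow> b \<noteq> 0 \<and> Fract p q = Fract a b) = (p0, q0)"
    by (cases "(SOME x. case x of (a, b) \<Rightarrow> b \<noteq> 0 \<and> Fract p q = Fract a b)") auto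
  from someI_ex[OF ex] pq have q0: "q0 \<noteq> 0" and e: "Fract p q = Fract p0 q0" by auto
  from e q q0 have h: "p * q0 = p0 * q" by (simp add: eq_fract)
  hence h': "pderiv p * q0 + p * pderiv q0 = pderiv p0 * q + p0 * pderiv q"
    by (metis pderiv_mult mult.commute add.commute)
  have "(pderiv p0 * q0 - p0 * pderiv q0) * (q * q) = (pderiv p * q - p * pderiv q) * (q0 * q0)"
  proof -
    have "(pderiv p0 * q0 - p0 * pderiv q0) * (q * q) = q0 * q * (pderiv p0 * q) - pderiv q0 * q * (p0 * q)"
      by (simp add: algebra_simps)
    also have "\<dots> = q0 * q * (pderiv p * q0 + p * pderiv q0 - p0 * pderiv q) - pderiv q0 * q * (p * q0)"
      using h h' by (simp add: algebra_simps)
    also have "\<dots> = q0 * q0 * (pderiv p * q) - q0 * q * (p0 * pderiv q)"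
      by (simp add: algebra_simps)
    also have "\<dots> = q0 * q0 * (pderiv p * q) - q0 * q0 * (p * pderiv q)"
      using h by (simp add: algebra_simps)
    finally show ?thesis by (simp add: algebra_simps)
  qed
  thus ?thesis unfolding rderiv_def using pq q q0 by (simp add: eq_fract)
qed

lemma rderiv_add: "rderiv (a + b) = rderiv a + rderiv b"
proof (cases a; cases b)
  fix p q r s :: "complex poly"
  assume a: "a = Fract p q" "q \<noteq> 0" and b: "b = Fract r s" "s \<noteq> 0"
  show ?thesis using a b
    by (simp add: rderiv_Fract eq_fract pderiv_add pderiv_mult algebra_simps)
qed

lemma rderiv_mult: "rderiv (a * b) = rderiv a * b + a * rderiv b"
proof (cases a; cases b)
  fix p q r s :: "complex poly"
  assume a: "a = Fract p q" "q \<noteq> 0" and b: "b = Fract r s" "s \<noteq> 0"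
  show ?thesis using a b
    by (simp add: rderiv_Fract eq_fract pderiv_add pderiv_mult algebra_simps)
qed

lemma rderiv_0 [simp]: "rderiv 0 = 0"
  by (simp add: Zero_fract_def rderiv_Fract)

lemma rderiv_1 [simp]: "rderiv 1 = 0"
  by (simp add: One_fract_def rderiv_Fract Zero_fract_def)

lemma Suc_choose': "Suc n choose k = (n choose k) + (if k = 0 then 0 else (n choose (k-1)))"
  by (cases k) simp_all

lemma deriv_sum_gen:
  fixes d :: "'a::comm_ring_1 \<Rightarrow> 'a"
  assumes add: "\<And>x y. d (x + y) = d x + d y"
  shows "d (sum f A) = (\<Sum>a\<in>A. d (f a))"
proof -
  have d0: "d 0 = 0" using add[of 0 0] by simp
  show ?thesis by (induction A rule: infinite_finite_induct) (auto simp: d0 add)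
qed

lemma deriv_ofnat_gen:
  fixes d :: "'a::comm_ring_1 \<Rightarrow> 'a"
  assumes add: "\<And>x y. d (x + y) = d x + d y"
  shows "d (of_nat c * x) = of_nat c * d x"
proof -
  have d0: "d 0 = 0" using add[of 0 0] by simp
  show ?thesis by (induction c) (auto simp: d0 add algebra_simps)
qed

lemma sum_Suc_reindex':
  fixes f :: "nat \<Rightarrow> 'a::ab_group_add"
  shows "sum f {0..n} = f 0 - f (Suc n) + sum (\<lambda>i. f (Suc i)) {0..n}"
  by (induct n) auto

lemma leibniz_gen:
  fixes d :: "'a::comm_ring_1 \<Rightarrow> 'a"
  assumes add: "\<And>x y. d (x + y) = d x + d y"
    and mult: "\<And>x y. d (x * y) = d x * y + x * d y"
  shows "(d ^^ n) (x * y) = (\<Sum>i = 0..n. of_nat (n choose i) * (d ^^ i) x * (d ^^ (n-i)) y)"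
proof -
  have d1: "d 1 = 0" using mult[of 1 1] by simp
  have dc: "d (of_nat c) = 0" for c using deriv_ofnat_gen[OF add, of c 1] d1 by simp
  show ?thesis
proof (induction n)
  case 0 then show ?case by simp
next
  case (Suc n)
  have "(d ^^ Suc n) (x * y) = d (\<Sum>i = 0..n. of_nat (n choose i) * ((d ^^ i) x * (d ^^ (n-i)) y))"
    using Suc by (simp add: mult.assoc)
  also have "\<dots> = (\<Sum>i = 0..n. of_nat (n choose i) * (d ((d ^^ i) x) * (d ^^ (n-i)) y + d ((d ^^ (n-i)) y) * (d ^^ i) x))"
    by (simp add: deriv_sum_gen[OF add] deriv_ofnat_gen[OF add] mult dc algebra_simps)
  also have "\<dots> = y * d ((d ^^ n) x) + (\<Sum>i = 0..n. (d ^^ i) x * (of_nat (Suc n choose i) * (d ^^ (Suc n - i)) y))"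
    apply (simp add: Suc_choose' algebra_simps sum.distrib)
    apply (subst (4) sum_Suc_reindex')
    apply (auto simp: algebra_simps Suc_diff_le intro: sum.cong)
    done
  also have "\<dots> = (\<Sum>i = 0..Suc n. of_nat (Suc n choose i) * (d ^^ i) x * (d ^^ (Suc n-i)) y)"
    by (simp add: algebra_simps)
  finally show ?case .
qed
qed

definition DD :: "ratfun poly \<Rightarrow> ratfun poly" where
  "DD f = map_poly rderiv f + pderiv f"

lemma coeff_map_rderiv: "coeff (map_poly rderiv f) n = rderiv (coeff f n)"
  by (simp add: coeff_map_poly)

lemma map_rderiv_add: "map_poly rderiv (f + g) = map_poly rderiv f + map_poly rderiv g"
  by (rule poly_eqI) (simp add: coeff_map_rderiv rderiv_add)

lemma map_rderiv_mult: "map_poly rderiv (f * g) = map_poly rderiv f * g + f * map_poly rderiv g"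
  by (rule poly_eqI)
     (simp add: coeff_map_rderiv coeff_mult deriv_sum_gen[OF rderiv_add] rderiv_mult sum.distrib)

lemma DD_add: "DD (f + g) = DD f + DD g"
  by (simp add: DD_def map_rderiv_add pderiv_add algebra_simps)

lemma DD_mult: "DD (f * g) = DD f * g + f * DD g"
  by (simp add: DD_def map_rderiv_mult pderiv_mult algebra_simps)

lemma DD_const: "DD [:b:] = [:rderiv b:]"
  by (rule poly_eqI) (simp add: DD_def coeff_map_rderiv coeff_pCons split: nat.split)

lemma DD_pow_const: "(DD ^^ k) [:b:] = [:(rderiv ^^ k) b:]"
  by (induction k) (simp_all add: DD_const)

lemma DD_leibniz: "(DD ^^ n) (f * g) = (\<Sum>i\<le>n. of_nat (n choose i) * (DD ^^ i) f * (DD ^^ (n-i)) g)"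
  using leibniz_gen[of DD, OF DD_add DD_mult] by (simp add: atLeast0AtMost)

lemma DD_pow_add: "(DD ^^ n) (f + g) = (DD ^^ n) f + (DD ^^ n) g"
  by (induction n) (simp_all add: DD_add)

lemma DD_pow_sum: "(DD ^^ n) (sum f A) = (\<Sum>a\<in>A. (DD ^^ n) (f a))"
  by (rule deriv_sum_gen[OF DD_pow_add])

definition act :: "diffop \<Rightarrow> ratfun poly \<Rightarrow> ratfun poly" where
  "act L f = (\<Sum>i\<le>degree L. [:coeff L i:] * (DD ^^ i) f)"

lemma act_bound: "degree L \<le> N \<Longrightarrow> act L f = (\<Sum>i\<le>N. [:coeff L i:] * (DD ^^ i) f)"
  unfolding act_def
  by (rule sum.mono_neutral_left) (auto simp: coeff_eq_0)

lemma act_add: "act (P + Q) f = act P f + act Q f"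
proof -
  define N where "N = max (degree P) (degree Q)"
  have "degree (P + Q) \<le> N" unfolding N_def by (rule degree_add_le) auto
  thus ?thesis
    by (simp add: act_bound[of P N] act_bound[of Q N] act_bound[of "P+Q" N] N_def sum.distrib smult_add_left)
qed

lemma act_0 [simp]: "act 0 f = 0"
  by (simp add: act_def)

lemma act_sum: "act (sum g A) f = (\<Sum>a\<in>A. act (g a) f)"
  by (induction A rule: infinite_finite_induct) (simp_all add: act_add)

lemma act_monom: "act (monom c n) f = [:c:] * (DD ^^ n) f"
proof -
  have "act (monom c n) f = (\<Sum>i\<le>n. [:coeff (monom c n) i:] * (DD ^^ i) f)"
    by (rule act_bound) (simp add: degree_monom_le)
  also have "\<dots> = (\<Sum>i\<le>n. if n = i then [:c:] * (DD ^^ i) f else 0)"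
    by (rule sum.cong) (auto simp: coeff_monom)
  finally show ?thesis by simp
qed

lemma act_diff: "act (P - Q) f = act P f - act Q f"
  using act_add[of "P - Q" Q f] by simp

lemma act_hom: "act (dop_mult P Q) f = act P (act Q f)"
proof -
  have "act (dop_mult P Q) f = (\<Sum>i\<le>degree P. \<Sum>j\<le>degree Q. \<Sum>k\<le>i.
      [:of_nat (i choose k) * coeff P i * (rderiv ^^ k) (coeff Q j):] * (DD ^^ (i + j - k)) f)"
    by (simp add: dop_mult_def act_sum act_monom)
  also have "\<dots> = (\<Sum>i\<le>degree P. \<Sum>j\<le>degree Q. \<Sum>k\<le>i.
      [:coeff P i:] * (of_nat (i choose k) * (DD ^^ k) [:coeff Q j:] * (DD ^^ (i - k)) ((DD ^^ j) f)))"
  proof (intro sum.cong refl)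
    fix i j k :: nat assume "k \<in> {..i}"
    hence "i + j - k = (i - k) + j" by auto
    hence e: "(DD ^^ (i + j - k)) f = (DD ^^ (i - k)) ((DD ^^ j) f)" by (metis funpow_add comp_apply)
    thus "[:of_nat (i choose k) * coeff P i * (rderiv ^^ k) (coeff Q j):] * (DD ^^ (i + j - k)) f =
      [:coeff P i:] * (of_nat (i choose k) * (DD ^^ k) [:coeff Q j:] * (DD ^^ (i - k)) ((DD ^^ j) f))"
      unfolding e by (simp add: DD_pow_const of_nat_poly algebra_simps)
  qed
  also have "\<dots> = act P (act Q f)"
    unfolding act_def DD_pow_sum DD_leibniz by (simp only: sum_distrib_left)
  finally show ?thesis .
qed

lemma of_nat_ratfun_eq0: "(of_nat n :: ratfun) = 0 \<longleftrightarrow> n = 0"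
  by (simp add: of_nat_fract Zero_fract_def eq_fract of_nat_poly)

lemma rderiv_of_nat [simp]: "rderiv (of_nat c) = 0"
  using deriv_ofnat_gen[of rderiv c 1, OF rderiv_add] by simp

lemma map_rderiv_monom: "map_poly rderiv (monom a m) = monom (rderiv a) m"
  by (rule poly_eqI) (simp add: coeff_map_rderiv coeff_monom)

lemma DD_monom_nat: "DD (monom (of_nat c) m) = monom (of_nat (c * m)) (m - 1)"
  by (simp add: DD_def map_rderiv_monom pderiv_monom mult.commute)

lemma DD_pow_monom1: "(DD ^^ i) (monom 1 n) = monom (of_nat (\<Prod>j<i. (n - j))) (n - i)"
proof (induction i)
  case 0 then show ?case by simp
next
  case (Suc i)
  show ?case using Suc by (simp add: DD_monom_nat mult.commute del: of_nat_prod)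
qed

lemma act_nonzero:
  assumes "L \<noteq> 0" shows "coeff (act L (monom 1 (degree L))) 0 \<noteq> 0"
proof -
  define d where "d = degree L"
  have "coeff (act L (monom 1 d)) 0 = (\<Sum>i\<le>d. coeff L i * coeff (monom (of_nat (\<Prod>j<i. (d - j))) (d - i)) 0)"
    by (simp add: act_def d_def DD_pow_monom1 coeff_sum)
  also have "\<dots> = (\<Sum>i\<le>d. if i = d then coeff L i * of_nat (\<Prod>j<i. (d - j)) else 0)"
    by (rule sum.cong) (auto simp: coeff_monom)
  also have "\<dots> = coeff L d * of_nat (\<Prod>j<d. (d - j))" by simp
  also have "\<dots> \<noteq> 0"
  proof -
    have "(\<Prod>j<d. (d - j)) \<noteq> 0" by simp
    hence "(of_nat (\<Prod>j<d. (d - j)) :: ratfun) \<noteq> 0" by (simp add: of_nat_ratfun_eq0 del: of_nat_prod)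
    thus ?thesis using assms by (simp add: d_def del: of_nat_prod)
  qed
  finally show ?thesis unfolding d_def .
qed

lemma act_eq_imp_eq:
  assumes "\<And>f. act P f = act Q f" shows "P = Q"
proof (rule ccontr)
  assume "P \<noteq> Q"
  hence "P - Q \<noteq> 0" by simp
  from act_nonzero[OF this] show False using assms by (simp add: act_diff)
qed

lemma dop_assoc: "dop_mult (dop_mult P Q) R = dop_mult P (dop_mult Q R)"
  by (rule act_eq_imp_eq) (simp add: act_hom)

lemma coeff_dop_mult: "coeff (dop_mult P Q) m = (\<Sum>i\<le>degree P. \<Sum>j\<le>degree Q. \<Sum>k\<le>i.
      (if i + j - k = m then of_nat (i choose k) * coeff P i * (rderiv ^^ k) (coeff Q j) else 0))"
  by (simp add: dop_mult_def coeff_sum coeff_monom)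

lemma coeff_dop_mult_high: "m > degree P + degree Q \<Longrightarrow> coeff (dop_mult P Q) m = 0"
  unfolding coeff_dop_mult by (intro sum.neutral ballI) auto

lemma coeff_dop_mult_top: "coeff (dop_mult P Q) (degree P + degree Q) = lead_coeff P * lead_coeff Q"
proof -
  have "coeff (dop_mult P Q) (degree P + degree Q) = (\<Sum>i\<le>degree P. \<Sum>j\<le>degree Q. \<Sum>k\<le>i.
      (if i = degree P \<and> j = degree Q \<and> k = 0 then lead_coeff P * lead_coeff Q else 0))"
    unfolding coeff_dop_mult by (intro sum.cong refl) auto
  also have "\<dots> = (\<Sum>i\<le>degree P. \<Sum>j\<le>degree Q.
      (if i = degree P \<and> j = degree Q then lead_coeff P * lead_coeff Q else 0))"
    by (intro sum.cong refl) auto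
  also have "\<dots> = (\<Sum>i\<le>degree P. if i = degree P then (\<Sum>j\<le>degree Q.
      (if j = degree Q then lead_coeff P * lead_coeff Q else 0)) else 0)"
    by (intro sum.cong refl) auto
  also have "\<dots> = lead_coeff P * lead_coeff Q"
    by simp
  finally show ?thesis .
qed

lemma dop_mult_degree:
  assumes "P \<noteq> 0" "Q \<noteq> 0"
  shows "dop_mult P Q \<noteq> 0" "degree (dop_mult P Q) = degree P + degree Q"
proof -
  have c: "coeff (dop_mult P Q) (degree P + degree Q) \<noteq> 0"
    using assms by (simp add: coeff_dop_mult_top)
  thus "dop_mult P Q \<noteq> 0" by auto
  show "degree (dop_mult P Q) = degree P + degree Q"
  proof (rule antisym)
    show "degree (dop_mult P Q) \<le> degree P + degree Q"
      by (rule degree_le) (simp add: coeff_dop_mult_high)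
    show "degree P + degree Q \<le> degree (dop_mult P Q)"
      using c by (rule le_degree)
  qed
qed

lemma rank_dvd:
  assumes Y1: "Y1 \<noteq> 0" and Y2: "Y2 \<noteq> 0"
  shows "true_rank (dop_mult Y2 Y1) dvd true_rank (dop_mult Y1 Y2)"
proof -
  define Xh where "Xh = dop_mult Y2 Y1"
  define g where "g = Gcd (dop_order ` (centralizer Xh - {0}))"
  have Xh0: "Xh \<noteq> 0" and dXh: "degree Xh = degree Y2 + degree Y1"
    using dop_mult_degree[OF Y2 Y1] by (simp_all add: Xh_def)
  have "Xh \<in> centralizer Xh - {0}" using Xh0 by (simp add: centralizer_def)
  hence gXh: "g dvd degree Y2 + degree Y1"
    unfolding g_def using dXh by (metis Gcd_dvd dop_order_def image_eqI)
  have "g dvd m" if mm: "m \<in> dop_order ` (centralizer (dop_mult Y1 Y2) - {0})" for m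
  proof -
    obtain M where M': "M \<in> centralizer (dop_mult Y1 Y2) - {0}" and m': "m = dop_order M"
      using mm by blast
    have M: "M \<in> centralizer (dop_mult Y1 Y2)" "M \<noteq> 0" and m: "m = degree M"
      using M' m' by (auto simp: dop_order_def)
    have com: "dop_mult (dop_mult Y1 Y2) M = dop_mult M (dop_mult Y1 Y2)"
      using M by (simp add: centralizer_def)
    have h2: "dop_mult Y1 (dop_mult Y2 (dop_mult M Z)) = dop_mult M (dop_mult Y1 (dop_mult Y2 Z))" for Z
      by (metis dop_assoc com)
    define N where "N = dop_mult (dop_mult Y2 M) Y1"
    have N0: "N \<noteq> 0" and dN: "degree N = degree Y2 + degree M + degree Y1"
      using dop_mult_degree[OF Y2 M(2)] dop_mult_degree[OF _ Y1, of "dop_mult Y2 M"]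
      by (simp_all add: N_def)
    have "dop_mult Xh N = dop_mult N Xh"
      by (simp add: Xh_def N_def dop_assoc h2)
    hence "N \<in> centralizer Xh - {0}" using N0 by (simp add: centralizer_def)
    hence "g dvd degree N"
      unfolding g_def by (metis Gcd_dvd dop_order_def image_eqI)
    hence "g dvd degree M + (degree Y2 + degree Y1)" using dN by (simp add: ac_simps)
    thus "g dvd m" using gXh m by (simp add: dvd_add_left_iff)
  qed
  hence "g dvd Gcd (dop_order ` (centralizer (dop_mult Y1 Y2) - {0}))"
    by (rule Gcd_greatest)
  thus ?thesis by (simp add: true_rank_def dop_rank_def g_def Xh_def)
qed

theorem mainTheorem15:
  fixes Y1 Y2 :: diffop
  assumes "Y1 \<noteq> 0" and "Y2 \<noteq> 0"
  shows "true_rank (dop_mult Y1 Y2) = true_rank (dop_mult Y2 Y1)"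
  using rank_dvd[OF assms] rank_dvd[OF assms(2,1)] by (rule dvd_antisym[rotated])

end
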